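(* Let $I=(x_1,\ldots,x_n)$ be any list of items with sizes $x_i\in(1/3,1]$. Then $$\mathbb{E}[\mathrm{BF}(I^\sigma)] \le \frac{5}{4}\,\mathrm{OPT}(I)+\frac14,$$ where $\sigma$ is drawn uniformly at random from the set $\mathcal{S}_n$ of permutations of $[n]$ and the expectation is over $\sigma$.
   Context: Bin packing: given a list $I=(x_1,\ldots,x_n)$ of items with sizes in $(0,1]$, a packing assigns items to unit-capacity bins so that the total size of items in each bin is at most $1$. $\mathrm{OPT}(I)$ denotes the minimum number of bins in a feasible packing. The online algorithm Best Fit (BF) processes the items in the given order and packs the current item into the fullest bin (largest current load) into which it fits, opening a new bin if it fits into no existing bin; items are never moved. $\mathrm{BF}(I)$ denotes the number of bins Best Fit uses on list $I$. For a permutation $\sigma\in\mathcal{S}_n$, $I^\sigma=(x_{\sigma(1)},\ldots,x_{\sigma(n)})$. *)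

theory Defs
  imports Complex_Main "HOL-Combinatorics.Permutations"
begin

definition feasible_packing :: "real list \<Rightarrow> nat \<Rightarrow> (nat \<Rightarrow> nat) \<Rightarrow> bool" where
  "feasible_packing xs k f \<longleftrightarrow>
     (\<forall>i<length xs. f i < k) \<and>
     (\<forall>b<k. (\<Sum>i\<in>{i. i < length xs \<and> f i = b}. xs ! i) \<le> 1)"

definition OPT :: "real list \<Rightarrow> nat" where
  "OPT xs = (LEAST k. \<exists>f. feasible_packing xs k f)"

(* Best Fit step: loads is the list of current bin loads (in opening order).
   The item x goes into a fullest bin into which it fits (first such bin among
   those of maximal load; ties between equal loads are irrelevant since bins
   with equal load are interchangeable), or into a new bin. *)
definition bf_step :: "real list \<Rightarrow> real \<Rightarrow> real list" where
  "bf_step loads x =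
     (let fits = filter (\<lambda>j. loads ! j + x \<le> 1) [0..<length loads] in
      if fits = [] then loads @ [x]
      else let m = Max ((\<lambda>j. loads ! j) ` set fits);
               j = hd (filter (\<lambda>j. loads ! j = m) fits)
           in loads[j := loads ! j + x])"

definition BF :: "real list \<Rightarrow> nat" where
  "BF xs = length (foldl bf_step [] xs)"

(* I^sigma = (x_{sigma(1)}, ..., x_{sigma(n)}), 0-indexed *)
definition permute_list_by :: "(nat \<Rightarrow> nat) \<Rightarrow> real list \<Rightarrow> real list" where
  "permute_list_by \<sigma> xs = map (\<lambda>i. xs ! \<sigma> i) [0..<length xs]"

definition expected_BF_random_order :: "real list \<Rightarrow> real" where
  "expected_BF_random_order xs =
     (\<Sum>\<sigma>\<in>{\<sigma>. \<sigma> permutes {..<length xs}}. real (BF (permute_list_by \<sigma> xs)))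
       / real (fact (length xs))"

end

theory Submission
  imports Defs
begin

definition ld :: "real list \<Rightarrow> nat list \<Rightarrow> real" where
  "ld ys b = sum_list (map (\<lambda>i. ys ! i) b)"

definition bfi :: "real list \<Rightarrow> nat list list \<Rightarrow> nat \<Rightarrow> nat list list" where
  "bfi ys B t =
     (let loads = map (ld ys) B; x = ys ! t;
          fits = filter (\<lambda>j. loads ! j + x \<le> 1) [0..<length loads] in
      if fits = [] then B @ [[t]]
      else let m = Max ((\<lambda>j. loads ! j) ` set fits);
               j = hd (filter (\<lambda>j. loads ! j = m) fits)
           in B[j := B ! j @ [t]])"

lemma ld_append: "ld ys (b @ [t]) = ld ys b + ys ! t"
  by (simp add: ld_def)

lemma bfi_corr: "map (ld ys) (bfi ys B t) = bf_step (map (ld ys) B) (ys ! t)"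
proof -
  define loads where "loads = map (ld ys) B"
  define x where "x = ys ! t"
  define fits where "fits = filter (\<lambda>j. loads ! j + x \<le> 1) [0..<length loads]"
  show ?thesis
  proof (cases "fits = []")
    case True
    then show ?thesis unfolding bfi_def bf_step_def Let_def
      using loads_def x_def fits_def by (simp add: ld_def)
  next
    case False
    define m where "m = Max ((\<lambda>j. loads ! j) ` set fits)"
    define j where "j = hd (filter (\<lambda>j. loads ! j = m) fits)"
    have "m \<in> (\<lambda>j. loads ! j) ` set fits" unfolding m_def
      using False by (intro Max_in) auto
    then have "filter (\<lambda>j. loads ! j = m) fits \<noteq> []"
      by (auto simp: filter_empty_conv)
    then have "j \<in> set fits" unfolding j_def
      using hd_in_set by fastforce
    then have jl: "j < length B" unfolding fits_def loads_def by auto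
    have "bfi ys B t = B[j := B ! j @ [t]]"
      unfolding bfi_def Let_def using False
      by (simp add: loads_def[symmetric] x_def[symmetric] fits_def[symmetric] m_def[symmetric] j_def[symmetric])
    moreover have "bf_step loads x = loads[j := loads ! j + x]"
      unfolding bf_step_def Let_def using False
      by (simp add: fits_def[symmetric] m_def[symmetric] j_def[symmetric])
    ultimately show ?thesis using jl
      by (simp add: loads_def x_def map_update ld_append)
  qed
qed

lemma foldl_corr: "foldl bf_step (map (ld ys) B) (map (\<lambda>i. ys ! i) is) = map (ld ys) (foldl (bfi ys) B is)"
  by (induction "is" arbitrary: B) (simp_all add: bfi_corr[symmetric])

definition run :: "real list \<Rightarrow> nat \<Rightarrow> nat list list" where
  "run ys t = foldl (bfi ys) [] [0..<t]"

lemma run_Suc: "run ys (Suc t) = bfi ys (run ys t) t"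
  by (simp add: run_def)

lemma run_0: "run ys 0 = []" by (simp add: run_def)

lemma BF_run: "BF ys = length (run ys (length ys))"
proof -
  have "foldl bf_step [] ys = foldl bf_step (map (ld ys) []) (map (\<lambda>i. ys ! i) [0..<length ys])"
    by (simp add: map_nth)
  also have "\<dots> = map (ld ys) (run ys (length ys))" unfolding run_def by (rule foldl_corr)
  finally show ?thesis by (simp add: BF_def)
qed

definition valid :: "real list \<Rightarrow> bool" where
  "valid ys \<longleftrightarrow> (\<forall>i<length ys. 1/3 < ys ! i \<and> ys ! i \<le> 1)"

definition Inv :: "real list \<Rightarrow> nat \<Rightarrow> nat list list \<Rightarrow> bool" where
  "Inv ys t B \<longleftrightarrow> distinct (concat B) \<and> set (concat B) = {..<t} \<and>
     (\<forall>b\<in>set B. (\<exists>u. b = [u]) \<or> (\<exists>u v. b = [u,v] \<and> ys ! u + ys ! v \<le> 1)) \<and>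
     (\<forall>u v. [u] \<in> set B \<longrightarrow> [v] \<in> set B \<longrightarrow> ys ! u \<le> 1/2 \<longrightarrow> ys ! v \<le> 1/2 \<longrightarrow> u = v)"

lemma ld_single[simp]: "ld ys [u] = ys ! u" by (simp add: ld_def)
lemma ld_pair[simp]: "ld ys [u,v] = ys ! u + ys ! v" by (simp add: ld_def)

lemma char:
  assumes val: "valid ys" and tl: "t < length ys" and inv: "Inv ys t B"
  shows "(bfi ys B t = B @ [[t]] \<and> (\<forall>b\<in>set B. 1 < ld ys b + ys ! t)) \<or>
         (\<exists>j y. j < length B \<and> B ! j = [y] \<and> ys ! y + ys ! t \<le> 1 \<and>
            (\<forall>b\<in>set B. ld ys b + ys ! t \<le> 1 \<longrightarrow> ld ys b \<le> ys ! y) \<and>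
            bfi ys B t = B[j := [y,t]])"
proof -
  define loads where "loads = map (ld ys) B"
  define x where "x = ys ! t"
  define fits where "fits = filter (\<lambda>j. loads ! j + x \<le> 1) [0..<length loads]"
  show ?thesis
  proof (cases "fits = []")
    case True
    then have "bfi ys B t = B @ [[t]]" unfolding bfi_def Let_def
      by (simp add: loads_def[symmetric] x_def[symmetric] fits_def[symmetric])
    moreover have "\<forall>b\<in>set B. 1 < ld ys b + ys ! t"
    proof
      fix b assume "b \<in> set B"
      then obtain i where "i < length B" "B ! i = b" by (auto simp: in_set_conv_nth)
      then have "i \<notin> set fits" using True by simp
      then show "1 < ld ys b + ys ! t" using \<open>i < length B\<close> \<open>B ! i = b\<close>
        unfolding fits_def loads_def x_def by auto
    qed
    ultimately show ?thesis by blast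
  next
    case False
    define m where "m = Max ((\<lambda>j. loads ! j) ` set fits)"
    define j where "j = hd (filter (\<lambda>j. loads ! j = m) fits)"
    have "m \<in> (\<lambda>j. loads ! j) ` set fits" unfolding m_def
      using False by (intro Max_in) auto
    then have "filter (\<lambda>j. loads ! j = m) fits \<noteq> []"
      by (auto simp: filter_empty_conv)
    then have "j \<in> set (filter (\<lambda>j. loads ! j = m) fits)" unfolding j_def
      using hd_in_set by blast
    then have jf: "j \<in> set fits" and jm: "loads ! j = m" by auto
    then have jl: "j < length B" and jfit: "ld ys (B ! j) + x \<le> 1"
      unfolding fits_def loads_def by auto
    have mx: "ld ys b \<le> m" if bB: "b \<in> set B" and bf: "ld ys b + x \<le> 1" for b
    proof -
      obtain i where "i < length B" "B ! i = b" using bB by (auto simp: in_set_conv_nth)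
      then have "i \<in> set fits" using bf unfolding fits_def loads_def by auto
      then have "loads ! i \<le> m" unfolding m_def by (intro Max_ge) auto
      then show ?thesis using \<open>i < length B\<close> \<open>B ! i = b\<close> by (simp add: loads_def)
    qed
    have bj: "B ! j \<in> set B" using jl by simp
    have xg: "1/3 < x" using val tl unfolding valid_def x_def by auto
    obtain y where y: "B ! j = [y]"
    proof -
      from inv bj have "(\<exists>u. B ! j = [u]) \<or> (\<exists>u v. B ! j = [u,v] \<and> ys ! u + ys ! v \<le> 1)"
        unfolding Inv_def by blast
      moreover have False if "B ! j = [u,v]" for u v
      proof -
        have "u \<in> set (concat B)" "v \<in> set (concat B)" using bj that by force+
        then have "u < t" "v < t" using inv unfolding Inv_def by auto
        then have "1/3 < ys ! u" "1/3 < ys ! v" using val tl unfolding valid_def by auto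
        then show False using jfit that xg by simp
      qed
      ultimately show thesis using that by blast
    qed
    have "bfi ys B t = B[j := B ! j @ [t]]"
      unfolding bfi_def Let_def using False
      by (simp add: loads_def[symmetric] x_def[symmetric] fits_def[symmetric] m_def[symmetric] j_def[symmetric])
    then have "bfi ys B t = B[j := [y,t]]" using y by simp
    moreover have "m = ys ! y" using jm y jl by (simp add: loads_def)
    ultimately show ?thesis using jl y jfit mx x_def by (intro disjI2 exI[of _ j] exI[of _ y]) auto
  qed
qed

lemma concat_upd:
  assumes "j < length B"
  shows "concat (B[j := v]) = concat (take j B) @ v @ concat (drop (Suc j) B)"
    and "concat B = concat (take j B) @ B ! j @ concat (drop (Suc j) B)"
proof -
  show "concat (B[j := v]) = concat (take j B) @ v @ concat (drop (Suc j) B)"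
    using assms by (simp add: upd_conv_take_nth_drop)
  have "concat B = concat (take j B @ B ! j # drop (Suc j) B)"
    using id_take_nth_drop[OF assms] by simp
  then show "concat B = concat (take j B) @ B ! j @ concat (drop (Suc j) B)" by simp
qed

lemma Inv_step:
  assumes val: "valid ys" and tl: "t < length ys" and inv: "Inv ys t B"
  shows "Inv ys (Suc t) (bfi ys B t)"
  using char[OF val tl inv]
proof
  assume A: "bfi ys B t = B @ [[t]] \<and> (\<forall>b\<in>set B. 1 < ld ys b + ys ! t)"
  have "t \<notin> set (concat B)" using inv unfolding Inv_def by auto
  moreover have "\<not> (ys ! v \<le> 1/2 \<and> ys ! t \<le> 1/2)" if "[v] \<in> set B" for v
    using A that by fastforce
  ultimately show ?thesis using inv A unfolding Inv_def by (auto simp: lessThan_Suc)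
next
  assume "\<exists>j y. j < length B \<and> B ! j = [y] \<and> ys ! y + ys ! t \<le> 1 \<and>
            (\<forall>b\<in>set B. ld ys b + ys ! t \<le> 1 \<longrightarrow> ld ys b \<le> ys ! y) \<and>
            bfi ys B t = B[j := [y,t]]"
  then obtain j y where jl: "j < length B" and y: "B ! j = [y]" and fit: "ys ! y + ys ! t \<le> 1"
    and eq: "bfi ys B t = B[j := [y,t]]" by blast
  have c1: "concat (B[j := [y,t]]) = concat (take j B) @ [y,t] @ concat (drop (Suc j) B)"
    and c2: "concat B = concat (take j B) @ [y] @ concat (drop (Suc j) B)"
    using concat_upd[OF jl] y by auto
  have d: "distinct (concat B)" and s: "set (concat B) = {..<t}" using inv unfolding Inv_def by auto
  have tn: "t \<notin> set (concat B)" using s by auto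
  have "distinct (concat (B[j := [y,t]]))" using d tn unfolding c1 unfolding c2 by auto
  moreover have "set (concat (B[j := [y,t]])) = {..<Suc t}" using s c1 c2
    by (auto simp: lessThan_Suc)
  moreover have "\<forall>b\<in>set (B[j := [y,t]]). (\<exists>u. b = [u]) \<or> (\<exists>u v. b = [u,v] \<and> ys ! u + ys ! v \<le> 1)"
    using inv fit unfolding Inv_def by (metis insert_iff set_update_subset_insert subsetD)
  moreover have "[u] \<in> set B" if "[u] \<in> set (B[j := [y,t]])" for u
    using that set_update_subset_insert by fastforce
  ultimately show ?thesis using inv unfolding Inv_def eq by blast
qed

lemma Inv_run:
  assumes val: "valid ys" and "t \<le> length ys"
  shows "Inv ys t (run ys t)"
  using assms(2)
proof (induction t)
  case 0 then show ?case by (simp add: run_0 Inv_def)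
next
  case (Suc t) then show ?case using Inv_step[OF val] by (simp add: run_Suc)
qed

definition isLS :: "real list \<Rightarrow> nat list \<Rightarrow> bool" where
  "isLS ys b \<longleftrightarrow> length b = 2 \<and> (\<exists>u\<in>set b. 1/2 < ys ! u)"

definition kcnt :: "real list \<Rightarrow> nat list list \<Rightarrow> nat" where
  "kcnt ys B = length (filter (isLS ys) B)"

lemma len_filter_sum: "length (filter P xs) = sum_list (map (\<lambda>x. if P x then 1 else 0) xs)"
  by (induction xs) auto

lemma distinct_bins: "distinct (concat B) \<Longrightarrow> [] \<notin> set B \<Longrightarrow> distinct B"
proof (induction B)
  case Nil then show ?case by simp
next
  case (Cons b B)
  have "b \<notin> set B"
  proof
    assume "b \<in> set B"
    obtain u where "u \<in> set b" using Cons.prems(2) by (cases b) auto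
    then show False using Cons.prems(1) \<open>b \<in> set B\<close> by auto
  qed
  then show ?case using Cons by auto
qed

lemma count_final:
  assumes val: "valid ys" and inv: "Inv ys (length ys) B"
  shows "2 * length B + card {i. i < length ys \<and> ys ! i \<le> 1/2} + kcnt ys B \<le> 2 * length ys + 1"
proof -
  define n where "n = length ys"
  define sm where "sm b = length (filter (\<lambda>u. ys ! u \<le> 1/2) b)" for b
  define Q where "Q b = (\<exists>u. b = [u] \<and> ys ! u \<le> 1/2)" for b
  have d: "distinct (concat B)" and s: "set (concat B) = {..<n}"
    and shp: "\<forall>b\<in>set B. (\<exists>u. b = [u]) \<or> (\<exists>u v. b = [u,v] \<and> ys ! u + ys ! v \<le> 1)"
    and sing: "\<forall>u v. [u] \<in> set B \<longrightarrow> [v] \<in> set B \<longrightarrow> ys ! u \<le> 1/2 \<longrightarrow> ys ! v \<le> 1/2 \<longrightarrow> u = v"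
    using inv unfolding Inv_def n_def by auto
  have ne: "[] \<notin> set B" using shp by auto
  have dB: "distinct B" by (rule distinct_bins[OF d ne])
  have bin: "2 + sm b + (if isLS ys b then 1 else 0) \<le> 2 * length b + (if Q b then 1 else 0)"
    if "b \<in> set B" for b
  proof -
    have "(\<exists>u. b = [u]) \<or> (\<exists>u v. b = [u,v] \<and> ys ! u + ys ! v \<le> 1)" using shp that by blast
    then show ?thesis
    proof
      assume "\<exists>u. b = [u]"
      then obtain u where "b = [u]" by blast
      then show ?thesis by (auto simp: sm_def Q_def isLS_def)
    next
      assume "\<exists>u v. b = [u,v] \<and> ys ! u + ys ! v \<le> 1"
      then obtain u v where b: "b = [u,v]" and f: "ys ! u + ys ! v \<le> 1" by blast
      show ?thesis using f by (auto simp: b sm_def Q_def isLS_def)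
    qed
  qed
  have "sum_list (map (\<lambda>b. 2 + sm b + (if isLS ys b then 1 else 0)) B)
        \<le> sum_list (map (\<lambda>b. 2 * length b + (if Q b then 1 else 0)) B)"
    using bin by (intro sum_list_mono) auto
  moreover have "sum_list (map (\<lambda>b. 2 + sm b + (if isLS ys b then 1 else 0)) B)
     = 2 * length B + sum_list (map sm B) + kcnt ys B"
    unfolding kcnt_def by (induction B) auto
  moreover have "sum_list (map (\<lambda>b. 2 * length b + (if Q b then 1 else 0)) B)
     = 2 * sum_list (map length B) + length (filter Q B)"
    by (induction B) auto
  moreover have "sum_list (map length B) = n"
  proof -
    have "sum_list (map length B) = length (concat B)" by (simp add: length_concat)
    also have "\<dots> = card (set (concat B))" using distinct_card[OF d] by simp
    finally show ?thesis using s by simp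
  qed
  moreover have "sum_list (map sm B) = card {i. i < n \<and> ys ! i \<le> 1/2}"
  proof -
    have "sum_list (map sm B) = length (filter (\<lambda>u. ys ! u \<le> 1/2) (concat B))"
      unfolding sm_def by (induction B) auto
    also have "\<dots> = card (set (filter (\<lambda>u. ys ! u \<le> 1/2) (concat B)))"
      using distinct_card[of "filter (\<lambda>u. ys ! u \<le> 1/2) (concat B)"] d by simp
    also have "set (filter (\<lambda>u. ys ! u \<le> 1/2) (concat B)) = {i. i < n \<and> ys ! i \<le> 1/2}"
      using s by auto
    finally show ?thesis .
  qed
  moreover have "length (filter Q B) \<le> 1"
  proof (cases "filter Q B")
    case Nil then show ?thesis by simp
  next
    case (Cons b0 rest)
    have "b0 \<in> set (filter Q B)" using Cons by simp
    then have b0: "b0 \<in> set B" "Q b0" by auto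
    have "set (filter Q B) \<subseteq> {b0}"
    proof
      fix b assume "b \<in> set (filter Q B)"
      then have "b \<in> set B" "Q b" by auto
      then show "b \<in> {b0}" using b0 sing unfolding Q_def by blast
    qed
    then have "card (set (filter Q B)) \<le> 1" using card_mono[of "{b0}"] by fastforce
    then show ?thesis using distinct_card[of "filter Q B"] dB by simp
  qed
  ultimately show ?thesis unfolding n_def by linarith
qed

definition Pot :: "real list \<Rightarrow> nat \<Rightarrow> nat list list \<Rightarrow> (nat \<times> nat) set \<Rightarrow> bool" where
  "Pot ys t B F \<longleftrightarrow> finite F \<and>
     (\<forall>(l,s)\<in>F. t \<le> s \<and> s < length ys \<and> l < s \<and> ys ! s \<le> 1/2 \<and> 1/2 < ys ! l \<and>
        ys ! l + ys ! s \<le> 1 \<and> (t \<le> l \<or> [l] \<in> set B)) \<and>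
     (\<forall>p\<in>F. \<forall>q\<in>F. fst p = fst q \<longleftrightarrow> snd p = snd q)"

lemma len_filter_upd:
  "j < length B \<Longrightarrow> length (filter P (B[j := v])) + (if P (B ! j) then 1 else 0)
     = length (filter P B) + (if P v then 1 else 0)"
proof (induction B arbitrary: j)
  case Nil then show ?case by simp
next
  case (Cons b B)
  show ?case
  proof (cases j)
    case 0 then show ?thesis by simp
  next
    case (Suc j')
    then have "j' < length B" using Cons.prems by simp
    then show ?thesis using Cons.IH[of j'] Suc by simp
  qed
qed

lemma in_set_upd: 
  assumes "x \<in> set B" "x \<noteq> B ! j" shows "x \<in> set (B[j := v])"
proof -
  obtain i where i: "i < length B" "B ! i = x" using assms(1) by (auto simp: in_set_conv_nth)
  then have "i \<noteq> j" using assms(2) by auto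
  then have "B[j := v] ! i = x" using i by simp
  then show ?thesis using i by (metis length_list_update nth_mem)
qed

lemma card_le_one_fst:
  assumes fin: "finite F" and m: "\<forall>p\<in>F. \<forall>q\<in>F. fst p = fst q \<longleftrightarrow> snd p = snd q"
  shows "card F \<le> card (F - {p. fst p = a}) + 1"
proof -
  have "\<forall>p1\<in>{p\<in>F. fst p = a}. \<forall>p2\<in>{p\<in>F. fst p = a}. p1 = p2"
  proof (intro ballI)
    fix p1 p2 assume "p1 \<in> {p\<in>F. fst p = a}" "p2 \<in> {p\<in>F. fst p = a}"
    then have "p1 \<in> F" "p2 \<in> F" "fst p1 = fst p2" by auto
    then have "snd p1 = snd p2" using m by blast
    then show "p1 = p2" using \<open>fst p1 = fst p2\<close> by (rule prod_eqI[rotated])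
  qed
  then have c1: "card {p\<in>F. fst p = a} \<le> 1"
    using card_le_Suc0_iff_eq[of "{p\<in>F. fst p = a}"] fin by simp
  have "F \<subseteq> (F - {p. fst p = a}) \<union> {p\<in>F. fst p = a}" by blast
  then have "card F \<le> card ((F - {p. fst p = a}) \<union> {p\<in>F. fst p = a})"
    using fin by (intro card_mono) auto
  also have "\<dots> \<le> card (F - {p. fst p = a}) + card {p\<in>F. fst p = a}" by (rule card_Un_le)
  finally show ?thesis using c1 by linarith
qed

lemma PotI:
  assumes "finite F" "\<forall>p\<in>F. \<forall>q\<in>F. fst p = fst q \<longleftrightarrow> snd p = snd q"
    "\<And>p. p \<in> F \<Longrightarrow> (\<lambda>(l,s). t \<le> s \<and> s < length ys \<and> l < s \<and> ys ! s \<le> 1/2 \<and> 1/2 < ys ! l \<and>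
        ys ! l + ys ! s \<le> 1 \<and> (t \<le> l \<or> [l] \<in> set B)) p"
  shows "Pot ys t B F"
  using assms unfolding Pot_def by blast

lemma isLS_single[simp]: "\<not> isLS ys [u]" by (simp add: isLS_def)

lemma Pot_step:
  assumes val: "valid ys" and tl: "t < length ys" and inv: "Inv ys t B" and pot: "Pot ys t B F"
  shows "\<exists>F'. Pot ys (Suc t) (bfi ys B t) F' \<and> kcnt ys B + card F \<le> kcnt ys (bfi ys B t) + card F'"
proof -
  have fin: "finite F" and P: "\<And>l s. (l,s) \<in> F \<Longrightarrow> t \<le> s \<and> s < length ys \<and> l < s \<and> ys ! s \<le> 1/2 \<and> 1/2 < ys ! l \<and>
        ys ! l + ys ! s \<le> 1 \<and> (t \<le> l \<or> [l] \<in> set B)"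
    and M: "\<forall>p\<in>F. \<forall>q\<in>F. fst p = fst q \<longleftrightarrow> snd p = snd q"
    using pot unfolding Pot_def by auto
  have Mfst: "s = s'" if "(l,s) \<in> F" "(l,s') \<in> F" for l s s' using M that by fastforce
  have Msnd: "l = l'" if "(l,s) \<in> F" "(l',s) \<in> F" for l l' s using M that by fastforce
  from char[OF val tl inv] show ?thesis
  proof
    assume A: "bfi ys B t = B @ [[t]] \<and> (\<forall>b\<in>set B. 1 < ld ys b + ys ! t)"
    have "Pot ys (Suc t) (bfi ys B t) F"
          proof (rule PotI)
      show "finite F" by fact
      show "\<forall>p\<in>F. \<forall>q\<in>F. fst p = fst q \<longleftrightarrow> snd p = snd q" by fact
      fix p assume pF: "p \<in> F"
      obtain l s where p: "p = (l,s)" by fastforce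
      have Q: "t \<le> s \<and> s < length ys \<and> l < s \<and> ys ! s \<le> 1/2 \<and> 1/2 < ys ! l \<and>
        ys ! l + ys ! s \<le> 1 \<and> (t \<le> l \<or> [l] \<in> set B)" using P pF p by blast
      have "s \<noteq> t"
      proof
        assume "s = t"
        then have "[l] \<in> set B" using Q by auto
        then show False using A Q \<open>s = t\<close> by fastforce
      qed
      then show "(\<lambda>(l, s). Suc t \<le> s \<and> s < length ys \<and> l < s \<and> ys ! s \<le> 1/2 \<and> 1/2 < ys ! l \<and>
        ys ! l + ys ! s \<le> 1 \<and> (Suc t \<le> l \<or> [l] \<in> set (bfi ys B t))) p"
        using Q A p by (auto simp: le_Suc_eq)
    qed
    moreover have "kcnt ys (bfi ys B t) = kcnt ys B" using A by (simp add: kcnt_def)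
    ultimately show ?thesis by auto
  next
    assume "\<exists>j y. j < length B \<and> B ! j = [y] \<and> ys ! y + ys ! t \<le> 1 \<and>
            (\<forall>b\<in>set B. ld ys b + ys ! t \<le> 1 \<longrightarrow> ld ys b \<le> ys ! y) \<and>
            bfi ys B t = B[j := [y,t]]"
    then obtain j y where jl: "j < length B" and y: "B ! j = [y]" and fit: "ys ! y + ys ! t \<le> 1"
      and mx: "\<And>b. b \<in> set B \<Longrightarrow> ld ys b + ys ! t \<le> 1 \<Longrightarrow> ld ys b \<le> ys ! y"
      and eq: "bfi ys B t = B[j := [y,t]]" by blast
    have kc: "kcnt ys (bfi ys B t) = kcnt ys B + (if isLS ys [y,t] then 1 else 0)"
      using len_filter_upd[OF jl, of "isLS ys" "[y,t]"] y eq by (simp add: kcnt_def)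
    have keep: "[l] \<in> set (bfi ys B t)" if "[l] \<in> set B" "l \<noteq> y" for l
      unfolding eq using that y by (intro in_set_upd) auto
    show ?thesis
    proof (cases "1/2 < ys ! t")
      case tL: True
      then have yS: "ys ! y \<le> 1/2" using fit by linarith
      define F' where "F' = F - {p. fst p = t}"
      have "Pot ys (Suc t) (bfi ys B t) F'"
        proof (rule PotI)
        show "finite F'" using fin F'_def by auto
        show "\<forall>p\<in>F'. \<forall>q\<in>F'. fst p = fst q \<longleftrightarrow> snd p = snd q" using M F'_def by auto
        fix p assume pF: "p \<in> F'"
        obtain l s where p: "p = (l,s)" by fastforce
        have Q: "t \<le> s \<and> s < length ys \<and> l < s \<and> ys ! s \<le> 1/2 \<and> 1/2 < ys ! l \<and>
          ys ! l + ys ! s \<le> 1 \<and> (t \<le> l \<or> [l] \<in> set B)" using P pF p F'_def by blast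
        have "l \<noteq> t" using pF p F'_def by auto
        have "s \<noteq> t" using Q tL by auto
        have "l \<noteq> y" using Q yS by auto
        then show "(\<lambda>(l, s). Suc t \<le> s \<and> s < length ys \<and> l < s \<and> ys ! s \<le> 1/2 \<and> 1/2 < ys ! l \<and>
          ys ! l + ys ! s \<le> 1 \<and> (Suc t \<le> l \<or> [l] \<in> set (bfi ys B t))) p"
          using Q p \<open>l \<noteq> t\<close> \<open>s \<noteq> t\<close> keep by auto
      qed
      moreover have "isLS ys [y,t]" using tL by (simp add: isLS_def)
      moreover have "card F \<le> card F' + 1" unfolding F'_def by (rule card_le_one_fst[OF fin M])
      ultimately show ?thesis using kc by (intro exI[of _ F']) auto
    next
      case tS: False
      show ?thesis
      proof (cases "1/2 < ys ! y")
        case yS: False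
        have nos: "(l,t) \<notin> F" for l
        proof
          assume lt: "(l,t) \<in> F"
          then have "[l] \<in> set B" "ys ! l + ys ! t \<le> 1" "1/2 < ys ! l" using P[OF lt] by auto
          then have "ys ! l \<le> ys ! y" using mx by fastforce
          then show False using \<open>1/2 < ys ! l\<close> yS by linarith
        qed
        have "Pot ys (Suc t) (bfi ys B t) F"
                  proof (rule PotI)
          show "finite F" by fact
          show "\<forall>p\<in>F. \<forall>q\<in>F. fst p = fst q \<longleftrightarrow> snd p = snd q" by fact
          fix p assume pF: "p \<in> F"
          obtain l s where p: "p = (l,s)" by fastforce
          have Q: "t \<le> s \<and> s < length ys \<and> l < s \<and> ys ! s \<le> 1/2 \<and> 1/2 < ys ! l \<and>
            ys ! l + ys ! s \<le> 1 \<and> (t \<le> l \<or> [l] \<in> set B)" using P pF p by blast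
          have "s \<noteq> t" using nos pF p by auto
          have "l \<noteq> t" using Q tS by auto
          have "l \<noteq> y" using Q yS by auto
          then show "(\<lambda>(l, s). Suc t \<le> s \<and> s < length ys \<and> l < s \<and> ys ! s \<le> 1/2 \<and> 1/2 < ys ! l \<and>
            ys ! l + ys ! s \<le> 1 \<and> (Suc t \<le> l \<or> [l] \<in> set (bfi ys B t))) p"
            using Q p \<open>l \<noteq> t\<close> \<open>s \<noteq> t\<close> keep by auto
        qed
        then show ?thesis using kc by (intro exI[of _ F]) auto
      next
        case yL: True
        have kc1: "kcnt ys (bfi ys B t) = kcnt ys B + 1" using kc yL by (simp add: isLS_def)
        have goodp: "Suc t \<le> s \<and> s < length ys \<and> l < s \<and> ys ! s \<le> 1/2 \<and> 1/2 < ys ! l \<and>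
            ys ! l + ys ! s \<le> 1 \<and> (Suc t \<le> l \<or> [l] \<in> set (bfi ys B t))"
          if pF: "(l,s) \<in> F" and ly: "l \<noteq> y" and st: "s \<noteq> t" for l s
        proof -
          have Q: "t \<le> s \<and> s < length ys \<and> l < s \<and> ys ! s \<le> 1/2 \<and> 1/2 < ys ! l \<and>
            ys ! l + ys ! s \<le> 1 \<and> (t \<le> l \<or> [l] \<in> set B)" using P pF by blast
          have "l \<noteq> t" using Q tS by auto
          then show ?thesis using Q st ly keep by auto
        qed
        show ?thesis
        proof (cases "\<exists>l' s2. (l',t) \<in> F \<and> (y,s2) \<in> F \<and> l' \<noteq> y")
          case True
          then obtain l' s2 where l't: "(l',t) \<in> F" and ys2: "(y,s2) \<in> F" and ly: "l' \<noteq> y" by blast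
          have s2t: "s2 \<noteq> t" using Msnd[of y s2 l'] l't ys2 ly by blast
          define F' where "F' = insert (l',s2) (F - {(l',t),(y,s2)})"
          have notin: "(l',s2) \<notin> F" using Mfst[of l' t s2] l't s2t by blast
          have cF': "card F' = card F - 1"
          proof -
            have "card (F - {(l',t),(y,s2)}) = card F - 2"
              using fin l't ys2 ly by (subst card_Diff_subset) auto
            moreover have "card F \<ge> 2"
            proof -
              have "card {(l',t),(y,s2)} = 2" using ly by auto
              moreover have "card {(l',t),(y,s2)} \<le> card F" using fin l't ys2 by (intro card_mono) auto
              ultimately show ?thesis by linarith
            qed
            ultimately show ?thesis unfolding F'_def using fin notin by auto
          qed
          have Pl't: "t \<le> t \<and> t < length ys \<and> l' < t \<and> ys ! t \<le> 1/2 \<and> 1/2 < ys ! l' \<and>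
            ys ! l' + ys ! t \<le> 1 \<and> (t \<le> l' \<or> [l'] \<in> set B)" using P[OF l't] .
          have Pys2: "t \<le> s2 \<and> s2 < length ys \<and> y < s2 \<and> ys ! s2 \<le> 1/2 \<and> 1/2 < ys ! y \<and>
            ys ! y + ys ! s2 \<le> 1 \<and> (t \<le> y \<or> [y] \<in> set B)" using P[OF ys2] .
          have l'B: "[l'] \<in> set B" using Pl't by auto
          have "ys ! l' \<le> ys ! y" using mx[OF l'B] Pl't by simp
          have "Pot ys (Suc t) (bfi ys B t) F'"
                      proof (rule PotI)
            show "finite F'" using fin F'_def by auto
            show "\<forall>p\<in>F'. \<forall>q\<in>F'. fst p = fst q \<longleftrightarrow> snd p = snd q"
            proof (intro ballI)
              fix p q assume "p \<in> F'" "q \<in> F'"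
              moreover have "fst q \<noteq> l'" "snd q \<noteq> s2" if "q \<in> F" "q \<noteq> (l',t)" "q \<noteq> (y,s2)" for q
                using that Mfst[of l' _ t] Msnd[of _ s2 y] l't ys2 by (metis prod.collapse)+
              ultimately show "fst p = fst q \<longleftrightarrow> snd p = snd q" unfolding F'_def
                using M by (metis Diff_iff insertCI insertE fst_conv snd_conv)
            qed
            fix p assume pF: "p \<in> F'"
            obtain l s where p: "p = (l,s)" by fastforce
            show "(\<lambda>(l, s). Suc t \<le> s \<and> s < length ys \<and> l < s \<and> ys ! s \<le> 1/2 \<and> 1/2 < ys ! l \<and>
              ys ! l + ys ! s \<le> 1 \<and> (Suc t \<le> l \<or> [l] \<in> set (bfi ys B t))) p"
            proof (cases "p = (l',s2)")
              case True
              then show ?thesis using Pl't Pys2 s2t \<open>ys ! l' \<le> ys ! y\<close> keep[OF l'B ly] by auto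
            next
              case False
              then have pF0: "(l,s) \<in> F" "(l,s) \<noteq> (l',t)" "(l,s) \<noteq> (y,s2)" using pF p F'_def by auto
              have "l \<noteq> y" using pF0 Mfst[of y s s2] ys2 by auto
              moreover have "s \<noteq> t" using pF0 Msnd[of l t l'] l't by auto
              ultimately show ?thesis using goodp pF0 p by auto
            qed
          qed
          then show ?thesis using kc1 cF' by (intro exI[of _ F']) auto
        next
          case False
          define F' where "F' = F - {p. fst p = y} - {p. snd p = t}"
          have cF: "card F \<le> card F' + 1"
          proof -
            have "\<forall>p1\<in>{p\<in>F. fst p = y \<or> snd p = t}. \<forall>p2\<in>{p\<in>F. fst p = y \<or> snd p = t}. p1 = p2"
            proof (intro ballI)
              fix p1 p2 assume "p1 \<in> {p\<in>F. fst p = y \<or> snd p = t}" "p2 \<in> {p\<in>F. fst p = y \<or> snd p = t}"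
              moreover obtain a1 b1 a2 b2 where pp: "p1 = (a1,b1)" "p2 = (a2,b2)" by fastforce
              ultimately have h: "(a1,b1) \<in> F" "(a2,b2) \<in> F" "a1 = y \<or> b1 = t" "a2 = y \<or> b2 = t" by auto
              have nf: "\<And>l' s2. (l',t) \<in> F \<Longrightarrow> (y,s2) \<in> F \<Longrightarrow> l' = y" using False by blast
              have "a1 = a2 \<and> b1 = b2"
              proof (cases "a1 = y")
                case a1: True
                show ?thesis
                proof (cases "a2 = y")
                  case True then show ?thesis using a1 h Mfst by blast
                next
                  case False
                  then have "b2 = t" using h by auto
                  then have "a2 = y" using nf h a1 by blast
                  then show ?thesis using False by blast
                qed
              next
                case a1: False
                then have b1: "b1 = t" using h by auto
                show ?thesis
                proof (cases "a2 = y")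
                  case True
                  then have "a1 = y" using nf h b1 by blast
                  then show ?thesis using a1 by blast
                next
                  case False
                  then have "b2 = t" using h by auto
                  then show ?thesis using b1 h Msnd by blast
                qed
              qed
              then show "p1 = p2" using pp by simp
            qed
            moreover have fin1: "finite {p\<in>F. fst p = y \<or> snd p = t}" using fin by simp
            ultimately have "card {p\<in>F. fst p = y \<or> snd p = t} \<le> Suc 0"
              using card_le_Suc0_iff_eq[OF fin1] by blast
            then have c1: "card {p\<in>F. fst p = y \<or> snd p = t} \<le> 1" by simp
            have "F \<subseteq> F' \<union> {p\<in>F. fst p = y \<or> snd p = t}" unfolding F'_def by blast
            then have "card F \<le> card (F' \<union> {p\<in>F. fst p = y \<or> snd p = t})"
              using fin unfolding F'_def by (intro card_mono) auto
            also have "\<dots> \<le> card F' + card {p\<in>F. fst p = y \<or> snd p = t}" by (rule card_Un_le)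
            finally show ?thesis using c1 by linarith
          qed
          have "Pot ys (Suc t) (bfi ys B t) F'"
                      proof (rule PotI)
            show "finite F'" using fin F'_def by auto
            show "\<forall>p\<in>F'. \<forall>q\<in>F'. fst p = fst q \<longleftrightarrow> snd p = snd q" using M F'_def by auto
            fix p assume pF: "p \<in> F'"
            obtain l s where p: "p = (l,s)" by fastforce
            show "(\<lambda>(l, s). Suc t \<le> s \<and> s < length ys \<and> l < s \<and> ys ! s \<le> 1/2 \<and> 1/2 < ys ! l \<and>
              ys ! l + ys ! s \<le> 1 \<and> (Suc t \<le> l \<or> [l] \<in> set (bfi ys B t))) p"
              using goodp[of l s] pF p F'_def by auto
          qed
          then show ?thesis using kc1 cF by (intro exI[of _ F']) auto
        qed
      qed
    qed
  qed
qed


lemma Pot_run: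
  assumes val: "valid ys" and p0: "Pot ys 0 [] F0" and tl: "t \<le> length ys"
  shows "\<exists>F. Pot ys t (run ys t) F \<and> card F0 \<le> kcnt ys (run ys t) + card F"
  using tl
proof (induction t)
  case 0 then show ?case using p0 by (auto simp: run_0 kcnt_def)
next
  case (Suc t)
  then obtain F where F: "Pot ys t (run ys t) F" "card F0 \<le> kcnt ys (run ys t) + card F" by auto
  have inv: "Inv ys t (run ys t)" using Inv_run[OF val] Suc.prems by simp
  obtain F' where "Pot ys (Suc t) (run ys (Suc t)) F'"
    "kcnt ys (run ys t) + card F \<le> kcnt ys (run ys (Suc t)) + card F'"
    using Pot_step[OF val _ inv F(1)] Suc.prems by (auto simp: run_Suc)
  then show ?case using F(2) by (intro exI[of _ F']) auto
qed

lemma key_lemma: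
  assumes val: "valid ys" and p0: "Pot ys 0 [] F0"
  shows "card F0 \<le> kcnt ys (run ys (length ys))"
proof -
  obtain F where F: "Pot ys (length ys) (run ys (length ys)) F"
    "card F0 \<le> kcnt ys (run ys (length ys)) + card F"
    using Pot_run[OF val p0] by auto
  have "F = {}"
  proof (rule ccontr)
    assume "F \<noteq> {}"
    then obtain l s where "(l,s) \<in> F" by auto
    then show False using F(1) unfolding Pot_def by fastforce
  qed
  then show ?thesis using F(2) by simp
qed

lemma feasible_exists: "valid xs \<Longrightarrow> \<exists>f. feasible_packing xs (length xs) f"
proof (rule exI[of _ id])
  assume v: "valid xs"
  have "{i. i < length xs \<and> id i = b} = {b}" if "b < length xs" for b using that by auto
  then show "feasible_packing xs (length xs) id" using v by (auto simp: feasible_packing_def valid_def)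
qed

lemma opt_feasible: "valid xs \<Longrightarrow> \<exists>f. feasible_packing xs (OPT xs) f"
  unfolding OPT_def using LeastI_ex[of "\<lambda>k. \<exists>f. feasible_packing xs k f"] feasible_exists by blast

lemma opt_lemma:
  assumes val: "valid xs"
  shows "\<exists>Sm1 g. Sm1 \<subseteq> {i. i < length xs \<and> xs ! i \<le> 1/2} \<and>
     (\<forall>c\<in>Sm1. g c < length xs \<and> 1/2 < xs ! (g c) \<and> xs ! (g c) + xs ! c \<le> 1) \<and> inj_on g Sm1 \<and>
     2 * length xs \<le> 2 * OPT xs + card {i. i < length xs \<and> xs ! i \<le> 1/2} + card Sm1 \<and>
     card Sm1 \<le> OPT xs"
proof -
  define n where "n = length xs"
  define K where "K = OPT xs"
  obtain f where f: "feasible_packing xs K f" using opt_feasible[OF val] K_def by blast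
  have fK: "\<And>i. i < n \<Longrightarrow> f i < K" and fS: "\<And>b. b < K \<Longrightarrow> (\<Sum>i\<in>{i. i < n \<and> f i = b}. xs ! i) \<le> 1"
    using f unfolding feasible_packing_def n_def by auto
  have pos: "\<And>i. i < n \<Longrightarrow> 1/3 < xs ! i \<and> xs ! i \<le> 1" using val unfolding valid_def n_def by auto
  have nn: "0 \<le> xs ! i" if "i < n" for i
  proof -
    have "1/3 < xs ! i" using pos[OF that] by blast
    then show ?thesis by linarith
  qed
  have subsum: "(\<Sum>i\<in>A. xs ! i) \<le> 1" if "A \<subseteq> {i. i < n \<and> f i = b}" "b < K" for A b
  proof -
    have "(\<Sum>i\<in>A. xs ! i) \<le> (\<Sum>i\<in>{i. i < n \<and> f i = b}. xs ! i)"
      using that nn by (intro sum_mono2) auto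
    then show ?thesis using fS[OF that(2)] by linarith
  qed
  have cardlt: "card A < 3" if "A \<subseteq> {i. i < n \<and> f i = b}" "b < K" for A b
  proof (cases "A = {}")
    case True then show ?thesis by simp
  next
    case False
    have finA: "finite A" using that(1) by (rule finite_subset) auto
    have "(\<Sum>i\<in>A. (1/3::real)) < (\<Sum>i\<in>A. xs ! i)"
      using False finA that(1) pos by (intro sum_strict_mono) auto
    then have "real (card A) / 3 < 1" using subsum[OF that] by simp
    then show ?thesis by simp
  qed
  have pair: "xs ! i + xs ! j \<le> 1" if "i < n" "j < n" "i \<noteq> j" "f i = f j" for i j
  proof -
    have "{i,j} \<subseteq> {k. k < n \<and> f k = f i}" using that by auto
    from subsum[OF this fK[OF that(1)]] show ?thesis using that(3) by simp
  qed
  have three: False if "i < n" "j < n" "k < n" "i \<noteq> j" "i \<noteq> k" "j \<noteq> k" "f i = f j" "f i = f k" for i j k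
  proof -
    have "{i,j,k} \<subseteq> {l. l < n \<and> f l = f i}" using that by auto
    from cardlt[OF this fK[OF that(1)]] show False using that by simp
  qed
  define Lg where "Lg = {i. i < n \<and> 1/2 < xs ! i}"
  define Sm where "Sm = {i. i < n \<and> xs ! i \<le> 1/2}"
  define Sm1 where "Sm1 = {c\<in>Sm. \<exists>a\<in>Lg. f a = f c}"
  define Sm0 where "Sm0 = Sm - Sm1"
  define g where "g c = (SOME a. a \<in> Lg \<and> f a = f c)" for c
  have g: "g c \<in> Lg \<and> f (g c) = f c" if "c \<in> Sm1" for c
  proof -
    have "\<exists>a. a \<in> Lg \<and> f a = f c" using that unfolding Sm1_def by auto
    then show ?thesis unfolding g_def by (rule someI_ex)
  qed
  have injf: "inj_on f Lg"
  proof
    fix a a' assume "a \<in> Lg" "a' \<in> Lg" "f a = f a'"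
    then show "a = a'" using pair[of a a'] unfolding Lg_def by force
  qed
  have injg: "inj_on g Sm1"
  proof
    fix c c' assume c: "c \<in> Sm1" "c' \<in> Sm1" "g c = g c'"
    show "c = c'"
    proof (rule ccontr)
      assume "c \<noteq> c'"
      have "c \<noteq> g c" "c' \<noteq> g c" using g[OF c(1)] g[OF c(2)] c c(1,2) unfolding Sm1_def Sm_def Lg_def by force+
      then show False using three[of "g c" c c'] g[OF c(1)] g[OF c(2)] c \<open>c \<noteq> c'\<close>
        unfolding Sm1_def Sm_def Lg_def by auto
    qed
  qed
  have finLg: "finite Lg" and finSm: "finite Sm" unfolding Lg_def Sm_def by auto
  have "card Sm1 = card (g ` Sm1)" using card_image[OF injg] by simp
  also have "\<dots> \<le> card Lg" using g finLg by (intro card_mono) auto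
  finally have m_le: "card Sm1 \<le> card Lg" .
  have cLg: "card (f ` Lg) = card Lg" using card_image[OF injf] .
  have imgK: "f ` Lg \<union> f ` Sm0 \<subseteq> {..<K}" using fK unfolding Lg_def Sm0_def Sm_def by auto
  have disj: "f ` Lg \<inter> f ` Sm0 = {}" unfolding Sm0_def Sm1_def by auto
  have "card (f ` Lg) + card (f ` Sm0) = card (f ` Lg \<union> f ` Sm0)"
    using disj finLg finSm unfolding Sm0_def by (intro card_Un_disjoint[symmetric]) auto
  also have "\<dots> \<le> K" using card_mono[OF _ imgK] by simp
  finally have cK: "card Lg + card (f ` Sm0) \<le> K" using cLg by simp
  have cSm0: "card Sm0 \<le> 2 * card (f ` Sm0)"
  proof -
    have "Sm0 \<subseteq> (\<Union>b\<in>f ` Sm0. {i\<in>Sm0. f i = b})" by auto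
    then have "card Sm0 \<le> card (\<Union>b\<in>f ` Sm0. {i\<in>Sm0. f i = b})"
      using finSm unfolding Sm0_def by (intro card_mono) auto
    also have "\<dots> \<le> (\<Sum>b\<in>f ` Sm0. card {i\<in>Sm0. f i = b})"
      by (rule card_UN_le) (use finSm in \<open>auto simp: Sm0_def\<close>)
    also have "\<dots> \<le> (\<Sum>b\<in>f ` Sm0. 2)"
    proof (rule sum_mono)
      fix b assume "b \<in> f ` Sm0"
      then have bK: "b < K" using imgK by auto
      have "{i\<in>Sm0. f i = b} \<subseteq> {i. i < n \<and> f i = b}" unfolding Sm0_def Sm_def by auto
      from cardlt[OF this bK] show "card {i\<in>Sm0. f i = b} \<le> 2" by simp
    qed
    finally show ?thesis by simp
  qed
  have nsplit: "n = card Lg + card Sm"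
  proof -
    have "{..<n} = Lg \<union> Sm" unfolding Lg_def Sm_def by auto
    moreover have "Lg \<inter> Sm = {}" unfolding Lg_def Sm_def by auto
    ultimately show ?thesis using card_Un_disjoint[OF finLg finSm] by (metis card_lessThan)
  qed
  have ssplit: "card Sm = card Sm1 + card Sm0"
  proof -
    have "Sm = Sm1 \<union> Sm0" "Sm1 \<inter> Sm0 = {}" unfolding Sm0_def Sm1_def by auto
    then show ?thesis using card_Un_disjoint[of Sm1 Sm0] finSm unfolding Sm0_def Sm1_def
      by (metis (no_types, lifting) finite_Diff finite_subset mem_Collect_eq subsetI)
  qed
  have "Sm1 \<subseteq> {i. i < length xs \<and> xs ! i \<le> 1/2}" unfolding Sm1_def Sm_def n_def by auto
  moreover have "\<forall>c\<in>Sm1. g c < length xs \<and> 1/2 < xs ! (g c) \<and> xs ! (g c) + xs ! c \<le> 1"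
  proof
    fix c assume c: "c \<in> Sm1"
    have "c \<noteq> g c" using g[OF c] c unfolding Sm1_def Sm_def Lg_def by force
    then show "g c < length xs \<and> 1/2 < xs ! (g c) \<and> xs ! (g c) + xs ! c \<le> 1"
      using g[OF c] c pair[of "g c" c] unfolding Sm1_def Sm_def Lg_def n_def by auto
  qed
  moreover have "2 * length xs \<le> 2 * OPT xs + card {i. i < length xs \<and> xs ! i \<le> 1/2} + card Sm1"
    using cK cSm0 nsplit ssplit unfolding K_def[symmetric] n_def[symmetric] Sm_def[symmetric] by linarith
  moreover have "card Sm1 \<le> OPT xs" using m_le cK K_def by linarith
  ultimately show ?thesis using injg by blast
qed

abbreviation Perms :: "nat \<Rightarrow> (nat \<Rightarrow> nat) set" where
  "Perms n \<equiv> {\<pi>. \<pi> permutes {..<n}}"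

lemma comp_transpose_perm:
  assumes "\<pi> permutes {..<n}" "a < n" "b < n"
  shows "\<pi> \<circ> transpose a b permutes {..<n}"
  using permutes_compose[OF permutes_swap_id assms(1)] assms(2,3) by auto

lemma sum_reindex_transpose:
  assumes "a < n" "b < n"
  shows "(\<Sum>\<pi>\<in>Perms n. h (\<pi> \<circ> transpose a b)) = (\<Sum>\<pi>\<in>Perms n. (h \<pi> :: real))"
  by (rule sum.reindex_bij_witness[of _ "\<lambda>\<pi>. \<pi> \<circ> transpose a b" "\<lambda>\<pi>. \<pi> \<circ> transpose a b"])
     (auto simp: comp_assoc comp_transpose_perm assms)

lemma half_perms:
  assumes "a < n" "b < n" "a \<noteq> b"
  shows "2 * card {\<pi>\<in>Perms n. \<pi> a < \<pi> b} = fact n"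
proof -
  define A where "A = {\<pi>\<in>Perms n. \<pi> a < \<pi> b}"
  define B where "B = {\<pi>\<in>Perms n. \<pi> b < \<pi> a}"
  have fin: "finite (Perms n)" using finite_permutations[of "{..<n}"] by simp
  have "B = (\<lambda>\<pi>. \<pi> \<circ> transpose a b) ` A"
  proof
    show "(\<lambda>\<pi>. \<pi> \<circ> transpose a b) ` A \<subseteq> B"
      unfolding A_def B_def using comp_transpose_perm assms by auto
    show "B \<subseteq> (\<lambda>\<pi>. \<pi> \<circ> transpose a b) ` A"
    proof
      fix \<pi> assume "\<pi> \<in> B"
      then have "\<pi> \<circ> transpose a b \<in> A" unfolding A_def B_def using comp_transpose_perm assms by auto
      moreover have "\<pi> = (\<pi> \<circ> transpose a b) \<circ> transpose a b" by (simp add: comp_assoc)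
      ultimately show "\<pi> \<in> (\<lambda>\<pi>. \<pi> \<circ> transpose a b) ` A" by blast
    qed
  qed
  moreover have "inj_on (\<lambda>\<pi>. \<pi> \<circ> transpose a b) A"
    by (rule inj_onI) (metis comp_assoc comp_id transpose_comp_involutory)
  ultimately have cB: "card B = card A" by (simp add: card_image)
  have "Perms n = A \<union> B"
  proof -
    have "\<pi> a \<noteq> \<pi> b" if "\<pi> permutes {..<n}" for \<pi>
      using permutes_inj[OF that] assms(3) by (auto dest: injD)
    then show ?thesis unfolding A_def B_def by (auto simp: neq_iff)
  qed
  moreover have "A \<inter> B = {}" unfolding A_def B_def by auto
  ultimately have "card (Perms n) = card A + card B"
    using fin by (metis card_Un_disjoint finite_Un)
  moreover have "card (Perms n) = fact n" using card_permutations[of "{..<n}" n] by simp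
  ultimately show ?thesis using cB A_def by simp
qed

lemma card_sum_ind: "finite D \<Longrightarrow> real (card {c\<in>D. P c}) = (\<Sum>c\<in>D. if P c then 1 else 0)"
  by (simp add: sum.inter_filter[symmetric])

definition Yc :: "(nat \<Rightarrow> nat) \<Rightarrow> (nat \<Rightarrow> nat) \<Rightarrow> nat set \<Rightarrow> nat" where
  "Yc g \<pi> D = card {c\<in>D. \<pi> c < \<pi> (g c)}"

lemma sum_Yc:
  assumes D: "D \<subseteq> {..<n}" and g: "\<forall>c\<in>D. g c < n \<and> g c \<noteq> c"
  shows "2 * (\<Sum>\<pi>\<in>Perms n. real (Yc g \<pi> D)) = real (card D) * fact n"
proof -
  have finD: "finite D" using D finite_subset by blast
  have fin: "finite (Perms n)" using finite_permutations[of "{..<n}"] by simp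
  have "(\<Sum>\<pi>\<in>Perms n. real (Yc g \<pi> D)) = (\<Sum>\<pi>\<in>Perms n. \<Sum>c\<in>D. if \<pi> c < \<pi> (g c) then 1 else 0)"
    unfolding Yc_def using finD by (intro sum.cong refl card_sum_ind)
  also have "\<dots> = (\<Sum>c\<in>D. \<Sum>\<pi>\<in>Perms n. if \<pi> c < \<pi> (g c) then 1 else 0)" by (rule sum.swap)
  also have "\<dots> = (\<Sum>c\<in>D. real (card {\<pi>\<in>Perms n. \<pi> c < \<pi> (g c)}))"
    using fin by (intro sum.cong refl card_sum_ind[symmetric])
  also have "\<dots> = (\<Sum>c\<in>D. real (fact n) / 2)"
  proof (rule sum.cong)
    fix c assume "c \<in> D"
    then have "2 * card {\<pi>\<in>Perms n. \<pi> c < \<pi> (g c)} = fact n" using D g by (intro half_perms) auto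
    then have "real (2 * card {\<pi>\<in>Perms n. \<pi> c < \<pi> (g c)}) = real (fact n)" by (simp only:)
    then show "real (card {\<pi>\<in>Perms n. \<pi> c < \<pi> (g c)}) = real (fact n) / 2"
      by simp
  qed simp
  finally show ?thesis by simp
qed

lemma avg_bound:
  assumes D: "D \<subseteq> {..<n}" and g: "\<forall>c\<in>D. g c < n \<and> g c \<notin> D" and inj: "inj_on g D"
  shows "4 * (\<Sum>\<pi>\<in>Perms n. real ((Yc g \<pi> D + 1) div 2)) \<le> real (fact n) * (card D + 1)"
proof (cases "D = {}")
  case True
  then show ?thesis by (simp add: Yc_def)
next
  case False
  then obtain c0 where c0: "c0 \<in> D" by auto
  define D0 where "D0 = D - {c0}"
  define a where "a = c0"
  define b where "b = g c0"
  define \<tau> where "\<tau> = transpose a b"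
  have finD: "finite D" using D finite_subset by blast
  have an: "a < n" "b < n" "a \<noteq> b" using c0 D g unfolding a_def b_def by auto
  have D0prop: "c \<noteq> a \<and> c \<noteq> b \<and> g c \<noteq> a \<and> g c \<noteq> b" if "c \<in> D0" for c
    using that g c0 inj unfolding D0_def a_def b_def by (auto dest: inj_onD)
  have YD: "Yc g \<pi> D = Yc g \<pi> D0 + (if \<pi> a < \<pi> b then 1 else 0)" for \<pi>
  proof -
    have "{c\<in>D. \<pi> c < \<pi> (g c)} = {c\<in>D0. \<pi> c < \<pi> (g c)} \<union> (if \<pi> a < \<pi> b then {a} else {})"
      using c0 unfolding D0_def a_def b_def by auto
    moreover have "a \<notin> {c\<in>D0. \<pi> c < \<pi> (g c)}" unfolding D0_def a_def by auto
    moreover have "finite {c\<in>D0. \<pi> c < \<pi> (g c)}" using finD unfolding D0_def by auto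
    ultimately show ?thesis unfolding Yc_def by auto
  qed
  have Y0: "Yc g (\<pi> \<circ> \<tau>) D0 = Yc g \<pi> D0" for \<pi>
  proof -
    have "{c\<in>D0. (\<pi> \<circ> \<tau>) c < (\<pi> \<circ> \<tau>) (g c)} = {c\<in>D0. \<pi> c < \<pi> (g c)}"
      using D0prop unfolding \<tau>_def by auto
    then show ?thesis unfolding Yc_def by simp
  qed
  have flip: "((\<pi> \<circ> \<tau>) a < (\<pi> \<circ> \<tau>) b) = (\<pi> b < \<pi> a)" for \<pi>
    unfolding \<tau>_def by simp
  have pairsum: "real ((Yc g \<pi> D + 1) div 2) + real ((Yc g (\<pi> \<circ> \<tau>) D + 1) div 2) = real (Yc g \<pi> D0) + 1"
    if "\<pi> permutes {..<n}" for \<pi>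
  proof -
    have "\<pi> a \<noteq> \<pi> b" using permutes_inj[OF that] an(3) by (auto dest: injD)
    then have "(Yc g \<pi> D + 1) div 2 + (Yc g (\<pi> \<circ> \<tau>) D + 1) div 2 = Yc g \<pi> D0 + 1"
      unfolding YD Y0 flip by auto
    then show ?thesis by (metis of_nat_1 of_nat_add)
  qed
  define h where "h \<pi> = real ((Yc g \<pi> D + 1) div 2)" for \<pi>
  have "2 * (\<Sum>\<pi>\<in>Perms n. h \<pi>) = (\<Sum>\<pi>\<in>Perms n. h \<pi>) + (\<Sum>\<pi>\<in>Perms n. h (\<pi> \<circ> \<tau>))"
    unfolding \<tau>_def using sum_reindex_transpose[OF an(1,2), of h] by simp
  also have "\<dots> = (\<Sum>\<pi>\<in>Perms n. real (Yc g \<pi> D0) + 1)"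
    unfolding sum.distrib[symmetric] h_def using pairsum by (intro sum.cong) auto
  also have "\<dots> = (\<Sum>\<pi>\<in>Perms n. real (Yc g \<pi> D0)) + fact n"
    using card_permutations[of "{..<n}" n] by (simp add: sum.distrib)
  finally have "4 * (\<Sum>\<pi>\<in>Perms n. h \<pi>) = 2 * (\<Sum>\<pi>\<in>Perms n. real (Yc g \<pi> D0)) + 2 * fact n" by simp
  also have "2 * (\<Sum>\<pi>\<in>Perms n. real (Yc g \<pi> D0)) = real (card D0) * fact n"
    using D g unfolding D0_def by (intro sum_Yc) auto
  also have "card D0 = card D - 1" unfolding D0_def using c0 finD by simp
  finally have "4 * (\<Sum>\<pi>\<in>Perms n. h \<pi>) = real (card D - 1) * fact n + 2 * fact n" .
  moreover have "card D \<ge> 1" using c0 finD by (metis card_0_eq empty_iff less_one not_le)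
  ultimately show ?thesis unfolding h_def by (simp add: algebra_simps of_nat_diff)
qed

lemma perm_len: "length (permute_list_by \<sigma> xs) = length xs"
  by (simp add: permute_list_by_def)

lemma perm_nth: "t < length xs \<Longrightarrow> permute_list_by \<sigma> xs ! t = xs ! (\<sigma> t)"
  by (simp add: permute_list_by_def)

lemma per_sigma:
  assumes val: "valid xs" and sig: "\<sigma> permutes {..<length xs}"
    and Sm1: "Sm1 \<subseteq> {i. i < length xs \<and> xs ! i \<le> 1/2}"
    and g: "\<forall>c\<in>Sm1. g c < length xs \<and> 1/2 < xs ! (g c) \<and> xs ! (g c) + xs ! c \<le> 1"
    and inj: "inj_on g Sm1"
    and opt: "2 * length xs \<le> 2 * OPT xs + card {i. i < length xs \<and> xs ! i \<le> 1/2} + card Sm1"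
  shows "BF (permute_list_by \<sigma> xs) \<le> OPT xs + (Yc g (inv \<sigma>) Sm1 + 1) div 2"
proof -
  define n where "n = length xs"
  define ys where "ys = permute_list_by \<sigma> xs"
  define \<pi> where "\<pi> = inv \<sigma>"
  have lys: "length ys = n" unfolding ys_def n_def by (simp add: perm_len)
  have sigimg: "\<sigma> t < n" if "t < n" for t using permutes_in_image[OF sig] that n_def by auto
  have piimg: "\<pi> t < n" if "t < n" for t using permutes_in_image[OF permutes_inv[OF sig]] that n_def \<pi>_def by auto
  have ysnth: "ys ! t = xs ! (\<sigma> t)" if "t < n" for t using that unfolding ys_def n_def by (simp add: perm_nth)
  have ysp: "ys ! (\<pi> c) = xs ! c" if "c < n" for c
    using ysnth[OF piimg[OF that]] unfolding \<pi>_def by (simp add: permutes_inverses(1)[OF sig])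
  have pinj: "inj \<pi>" unfolding \<pi>_def using permutes_inj[OF permutes_inv[OF sig]] .
  have valy: "valid ys" using val ysnth sigimg lys unfolding valid_def n_def by auto
  have inv: "Inv ys (length ys) (run ys (length ys))" by (rule Inv_run[OF valy]) simp
  have cnt: "2 * length (run ys n) + card {i. i < n \<and> ys ! i \<le> 1/2} + kcnt ys (run ys n) \<le> 2 * n + 1"
    using count_final[OF valy inv] lys by simp
  have sy: "card {i. i < n \<and> ys ! i \<le> 1/2} = card {i. i < n \<and> xs ! i \<le> 1/2}"
  proof -
    have "\<sigma> ` {i. i < n \<and> ys ! i \<le> 1/2} = {i. i < n \<and> xs ! i \<le> 1/2}"
    proof
      show "\<sigma> ` {i. i < n \<and> ys ! i \<le> 1/2} \<subseteq> {i. i < n \<and> xs ! i \<le> 1/2}"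
        using ysnth sigimg by auto
      show "{i. i < n \<and> xs ! i \<le> 1/2} \<subseteq> \<sigma> ` {i. i < n \<and> ys ! i \<le> 1/2}"
      proof
        fix c assume c: "c \<in> {i. i < n \<and> xs ! i \<le> 1/2}"
        then have "\<pi> c \<in> {i. i < n \<and> ys ! i \<le> 1/2}" using piimg ysp by auto
        moreover have "\<sigma> (\<pi> c) = c" unfolding \<pi>_def by (simp add: permutes_inverses(1)[OF sig])
        ultimately show "c \<in> \<sigma> ` {i. i < n \<and> ys ! i \<le> 1/2}" by force
      qed
    qed
    moreover have "inj_on \<sigma> {i. i < n \<and> ys ! i \<le> 1/2}"
      using permutes_inj[OF sig] by (auto intro: inj_on_subset)
    ultimately show ?thesis using card_image by fastforce
  qed
  define F0 where "F0 = (\<lambda>c. (\<pi> (g c), \<pi> c)) ` {c\<in>Sm1. \<pi> (g c) < \<pi> c}"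
  have finSm1: "finite Sm1" using Sm1 finite_subset by fastforce
  have pot: "Pot ys 0 [] F0"
  proof (rule PotI)
    show "finite F0" unfolding F0_def using finSm1 by auto
    show "\<forall>p\<in>F0. \<forall>q\<in>F0. fst p = fst q \<longleftrightarrow> snd p = snd q"
      unfolding F0_def using pinj inj by (auto dest: injD inj_onD)
    fix p assume "p \<in> F0"
    then obtain c where c: "c \<in> Sm1" "\<pi> (g c) < \<pi> c" and p: "p = (\<pi> (g c), \<pi> c)" unfolding F0_def by auto
    have cn: "c < n" "g c < n" using c Sm1 g n_def by auto
    show "(\<lambda>(l, s). 0 \<le> s \<and> s < length ys \<and> l < s \<and> ys ! s \<le> 1/2 \<and> 1/2 < ys ! l \<and>
        ys ! l + ys ! s \<le> 1 \<and> (0 \<le> l \<or> [l] \<in> set [])) p"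
      using c cn p ysp piimg lys Sm1 g by auto
  qed
  have cF0: "card F0 = card {c\<in>Sm1. \<pi> (g c) < \<pi> c}"
    unfolding F0_def by (rule card_image) (auto intro: inj_onI simp: inj_eq[OF pinj])
  have key: "card {c\<in>Sm1. \<pi> (g c) < \<pi> c} \<le> kcnt ys (run ys n)"
    using key_lemma[OF valy pot] cF0 lys by simp
  have split: "card {c\<in>Sm1. \<pi> (g c) < \<pi> c} + Yc g \<pi> Sm1 = card Sm1"
  proof -
    have "Sm1 = {c\<in>Sm1. \<pi> (g c) < \<pi> c} \<union> {c\<in>Sm1. \<pi> c < \<pi> (g c)}"
    proof -
      have "\<pi> c \<noteq> \<pi> (g c)" if "c \<in> Sm1" for c
        using that Sm1 g inj_eq[OF pinj] by force
      then show ?thesis by (auto simp: neq_iff)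
    qed
    moreover have "{c\<in>Sm1. \<pi> (g c) < \<pi> c} \<inter> {c\<in>Sm1. \<pi> c < \<pi> (g c)} = {}" by auto
    ultimately show ?thesis unfolding Yc_def using finSm1
      by (metis (no_types, lifting) card_Un_disjoint finite_Un)
  qed
  have "BF ys = length (run ys n)" using BF_run lys by simp
  then have "2 * BF ys \<le> 2 * OPT xs + Yc g \<pi> Sm1 + 1"
  proof -
    have opt': "2 * n \<le> 2 * OPT xs + card {i. i < n \<and> xs ! i \<le> 1/2} + card Sm1"
      using opt unfolding n_def .
    show ?thesis using \<open>BF ys = length (run ys n)\<close> cnt sy key split opt' by linarith
  qed
  then show ?thesis unfolding ys_def \<pi>_def by linarith
qed

theorem main:
  fixes xs :: "real list"
  assumes "\<forall>x\<in>set xs. 1/3 < x \<and> x \<le> 1"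
  shows "expected_BF_random_order xs \<le> 5/4 * real (OPT xs) + 1/4"
proof -
  define n where "n = length xs"
  have val: "valid xs" using assms unfolding valid_def by auto
  obtain Sm1 g where Sm1: "Sm1 \<subseteq> {i. i < length xs \<and> xs ! i \<le> 1/2}"
    and g: "\<forall>c\<in>Sm1. g c < length xs \<and> 1/2 < xs ! (g c) \<and> xs ! (g c) + xs ! c \<le> 1"
    and inj: "inj_on g Sm1"
    and opt: "2 * length xs \<le> 2 * OPT xs + card {i. i < length xs \<and> xs ! i \<le> 1/2} + card Sm1"
    and mK: "card Sm1 \<le> OPT xs"
    using opt_lemma[OF val] by blast
  define h where "h \<pi> = real ((Yc g \<pi> Sm1 + 1) div 2)" for \<pi>
  have fin: "finite (Perms n)" using finite_permutations[of "{..<n}"] by simp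
  have "(\<Sum>\<sigma>\<in>Perms n. real (BF (permute_list_by \<sigma> xs))) \<le> (\<Sum>\<sigma>\<in>Perms n. real (OPT xs) + h (inv \<sigma>))"
  proof (rule sum_mono)
    fix \<sigma> assume "\<sigma> \<in> Perms n"
    then have "BF (permute_list_by \<sigma> xs) \<le> OPT xs + (Yc g (inv \<sigma>) Sm1 + 1) div 2"
      using per_sigma[OF val _ Sm1 g inj opt] n_def by auto
    then show "real (BF (permute_list_by \<sigma> xs)) \<le> real (OPT xs) + h (inv \<sigma>)"
      unfolding h_def by (metis of_nat_add of_nat_mono)
  qed
  also have "\<dots> = real (fact n) * real (OPT xs) + (\<Sum>\<sigma>\<in>Perms n. h (inv \<sigma>))"
    using card_permutations[of "{..<n}" n] by (simp add: sum.distrib)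
  also have "(\<Sum>\<sigma>\<in>Perms n. h (inv \<sigma>)) = (\<Sum>\<pi>\<in>Perms n. h \<pi>)"
    by (rule sum.reindex_bij_witness[of _ inv inv]) (auto simp: permutes_inv_inv permutes_inv)
  finally have S: "(\<Sum>\<sigma>\<in>Perms n. real (BF (permute_list_by \<sigma> xs))) \<le> real (fact n) * real (OPT xs) + (\<Sum>\<pi>\<in>Perms n. h \<pi>)" .
  have "4 * (\<Sum>\<pi>\<in>Perms n. h \<pi>) \<le> real (fact n) * (card Sm1 + 1)"
    unfolding h_def
  proof (rule avg_bound)
    show "Sm1 \<subseteq> {..<n}" using Sm1 n_def by auto
    show "\<forall>c\<in>Sm1. g c < n \<and> g c \<notin> Sm1" using g Sm1 n_def by force
    show "inj_on g Sm1" by fact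
  qed
  also have "\<dots> \<le> real (fact n) * (OPT xs + 1)" using mK by (intro mult_left_mono) auto
  finally have H: "4 * (\<Sum>\<pi>\<in>Perms n. h \<pi>) \<le> real (fact n) * (OPT xs + 1)" .
  have fpos: "0 < real (fact n)" by simp
  have "expected_BF_random_order xs = (\<Sum>\<sigma>\<in>Perms n. real (BF (permute_list_by \<sigma> xs))) / real (fact n)"
    unfolding expected_BF_random_order_def n_def by simp
  also have "\<dots> \<le> (real (fact n) * real (OPT xs) + real (fact n) * (OPT xs + 1) / 4) / real (fact n)"
    using S H fpos by (intro divide_right_mono) auto
  also have "\<dots> = 5/4 * real (OPT xs) + 1/4" using fpos by (simp add: field_simps)
  finally show ?thesis .
qed

theorem theorem1:
  fixes xs :: "real list"
  assumes "\<forall>x\<in>set xs. 1/3 < x \<and> x \<le> 1"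
  shows "expected_BF_random_order xs \<le> 5/4 * real (OPT xs) + 1/4"
  using main[OF assms] .

end
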